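(* For every $n\geq 4$, \[\widehat{\mathsf{g}}(K_n^3)\geq \left\lceil\frac{(n-2)(n+3)(n-4)}{12}\right\rceil.\]
   Context: $K_n^3$ is the complete $3$-uniform hypergraph on vertex set $[n]$ (edges: all $3$-element subsets). Its Levi graph $L_n$ is the bipartite graph with vertex set $[n]\sqcup\binom{[n]}{3}$, $i$ adjacent to triple $t$ iff $i\in t$. The Euler genus of a graph $G$ is $\widehat{\mathsf{g}}(G)=\min\{2\mathsf{g}(G),\widetilde{\mathsf{g}}(G)\}$ where $\mathsf{g}$ is the orientable genus and $\widetilde{\mathsf{g}}$ the non-orientable genus (0 for planar graphs); $\widehat{\mathsf{g}}(K_n^3):=\widehat{\mathsf{g}}(L_n)$. *)

theory Defs
  imports Complex_Main
begin

text \<open>Graphs are given by a finite vertex set V and a symmetric, irreflexive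
adjacency relation E (only pairs inside V count).  The Euler genus of a connected
graph is defined combinatorially via embedding schemes (general rotation systems):
a rotation (a cyclic permutation of the neighbours of every vertex) together with
an edge signature (twisted / untwisted).  Faces are found by the standard face
tracing procedure on states (dart, local orientation); every face is traced exactly
twice (once in each direction), so the number of faces is half the number of orbits.
The Euler genus of the scheme is 2 - |V| + |E| - |F|, and the Euler genus of the
graph is the minimum over all schemes, which equals min(2 g, non-orientable genus).\<close>

definition nbrs :: "'a set \<Rightarrow> ('a \<Rightarrow> 'a \<Rightarrow> bool) \<Rightarrow> 'a \<Rightarrow> 'a set" where
  "nbrs V E v = {w \<in> V. E v w}"

definition darts :: "'a set \<Rightarrow> ('a \<Rightarrow> 'a \<Rightarrow> bool) \<Rightarrow> ('a \<times> 'a) set" where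
  "darts V E = {(u, w). u \<in> V \<and> w \<in> V \<and> E u w}"

definition graph_edges :: "'a set \<Rightarrow> ('a \<Rightarrow> 'a \<Rightarrow> bool) \<Rightarrow> 'a set set" where
  "graph_edges V E = {{u, w} | u w. (u, w) \<in> darts V E}"

definition is_rotation :: "'a set \<Rightarrow> ('a \<Rightarrow> 'a \<Rightarrow> bool) \<Rightarrow> ('a \<Rightarrow> 'a \<Rightarrow> 'a) \<Rightarrow> bool" where
  "is_rotation V E rot \<longleftrightarrow>
     (\<forall>v\<in>V. bij_betw (rot v) (nbrs V E v) (nbrs V E v) \<and>
        (\<forall>x\<in>nbrs V E v. \<forall>y\<in>nbrs V E v. \<exists>k. (rot v ^^ k) x = y))"

text \<open>An edge signature: tw u w = True means the edge uw is twisted (sign -1).\<close>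
definition is_signature :: "('a \<Rightarrow> 'a \<Rightarrow> bool) \<Rightarrow> bool" where
  "is_signature tw \<longleftrightarrow> (\<forall>u w. tw u w = tw w u)"

text \<open>Face tracing step on states (u, w, s): currently traversing dart u -> w with
local orientation s (True = clockwise).\<close>
definition face_step ::
  "'a set \<Rightarrow> ('a \<Rightarrow> 'a \<Rightarrow> bool) \<Rightarrow> ('a \<Rightarrow> 'a \<Rightarrow> 'a) \<Rightarrow> ('a \<Rightarrow> 'a \<Rightarrow> bool)
     \<Rightarrow> 'a \<times> 'a \<times> bool \<Rightarrow> 'a \<times> 'a \<times> bool" where
  "face_step V E rot tw = (\<lambda>(u, w, s).
     let s' = (if tw u w then \<not> s else s)
     in (w, (if s' then rot w u else inv_into (nbrs V E w) (rot w) u), s'))"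

definition orbits_of :: "('b \<Rightarrow> 'b) \<Rightarrow> 'b set \<Rightarrow> 'b set set" where
  "orbits_of f S = (\<lambda>x. {(f ^^ k) x | k. True}) ` S"

definition num_faces ::
  "'a set \<Rightarrow> ('a \<Rightarrow> 'a \<Rightarrow> bool) \<Rightarrow> ('a \<Rightarrow> 'a \<Rightarrow> 'a) \<Rightarrow> ('a \<Rightarrow> 'a \<Rightarrow> bool) \<Rightarrow> nat" where
  "num_faces V E rot tw =
     card (orbits_of (face_step V E rot tw) {(u, w, s). (u, w) \<in> darts V E}) div 2"

definition scheme_euler_genus ::
  "'a set \<Rightarrow> ('a \<Rightarrow> 'a \<Rightarrow> bool) \<Rightarrow> ('a \<Rightarrow> 'a \<Rightarrow> 'a) \<Rightarrow> ('a \<Rightarrow> 'a \<Rightarrow> bool) \<Rightarrow> int" where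
  "scheme_euler_genus V E rot tw =
     2 - int (card V) + int (card (graph_edges V E)) - int (num_faces V E rot tw)"

definition euler_genus :: "'a set \<Rightarrow> ('a \<Rightarrow> 'a \<Rightarrow> bool) \<Rightarrow> int" where
  "euler_genus V E =
     Min {scheme_euler_genus V E rot tw | rot tw. is_rotation V E rot \<and> is_signature tw}"

text \<open>Levi graph of the complete 3-uniform hypergraph on [n] = {1..n}.\<close>
definition triples :: "nat \<Rightarrow> nat set set" where
  "triples n = {t. t \<subseteq> {1..n} \<and> card t = 3}"

definition levi_V :: "nat \<Rightarrow> (nat + nat set) set" where
  "levi_V n = Inl ` {1..n} \<union> Inr ` triples n"

fun levi_E :: "nat \<Rightarrow> (nat + nat set) \<Rightarrow> (nat + nat set) \<Rightarrow> bool" where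
  "levi_E n (Inl i) (Inr t) = (i \<in> {1..n} \<and> t \<in> triples n \<and> i \<in> t)"
| "levi_E n (Inr t) (Inl i) = (i \<in> {1..n} \<and> t \<in> triples n \<and> i \<in> t)"
| "levi_E n _ _ = False"

end

theory Submission
  imports Defs
begin


lemma inj_on_funpow_S:
  assumes "f ` S \<subseteq> S" "inj_on f S"
  shows "inj_on (f ^^ i) S"
proof (induction i)
  case 0 then show ?case by simp
next
  case (Suc i)
  have img: "(f ^^ i) ` S \<subseteq> S" for i
    by (induction i) (use assms(1) in auto)
  show ?case unfolding funpow_Suc_right comp_def
  proof (rule inj_onI)
    fix a b assume a: "a \<in> S" "b \<in> S" "(f ^^ i) (f a) = (f ^^ i) (f b)"
    then have "f a = f b" using Suc.IH assms(1) by (meson image_subset_iff inj_onD)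
    then show "a = b" using assms(2) a by (meson inj_onD)
  qed
qed

lemma funpow_img: "f ` S \<subseteq> S \<Longrightarrow> x \<in> S \<Longrightarrow> (f ^^ k) x \<in> S"
  by (induction k) auto

lemma period_exists:
  assumes "finite S" "f ` S \<subseteq> S" "inj_on f S" "x \<in> S"
  shows "\<exists>p>0. (f ^^ p) x = x"
proof -
  have "\<not> inj_on (\<lambda>k. (f ^^ k) x) {..card S}"
  proof
    assume inj: "inj_on (\<lambda>k. (f ^^ k) x) {..card S}"
    have "(\<lambda>k. (f ^^ k) x) ` {..card S} \<subseteq> S" using funpow_img[OF assms(2,4)] by auto
    from card_inj_on_le[OF inj this assms(1)] show False by simp
  qed
  then obtain i j where ij: "i \<noteq> j" "(f ^^ i) x = (f ^^ j) x"
    unfolding inj_on_def by blast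
  have main: "\<exists>p>0. (f ^^ p) x = x" if "i < j" "(f ^^ i) x = (f ^^ j) x" for i j
  proof -
    have "(f ^^ j) x = (f ^^ i) ((f ^^ (j - i)) x)"
      using that(1) by (metis funpow_add le_add_diff_inverse less_imp_le o_apply)
    then have "(f ^^ i) ((f ^^ (j - i)) x) = (f ^^ i) x" using that by simp
    then have "(f ^^ (j - i)) x = x"
      using inj_on_funpow_S[OF assms(2,3), of i] funpow_img[OF assms(2,4)] assms(4)
      by (meson inj_onD)
    then show ?thesis using that by (intro exI[of _ "j - i"]) auto
  qed
  show ?thesis
  proof (cases "i < j")
    case True then show ?thesis using main ij by blast
  next
    case False then have "j < i" using ij by simp
    then show ?thesis using main ij by metis
  qed
qed

lemma funpow_mult_period: "(f ^^ p) x = x \<Longrightarrow> (f ^^ (p * k)) x = x"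
  by (induction k) (simp_all add: funpow_add)

lemma orbit_eq:
  assumes "finite S" "f ` S \<subseteq> S" "inj_on f S" "x \<in> S"
  shows "{(f ^^ m) ((f ^^ k) x) | m. True} = {(f ^^ m) x | m. True}"
proof -
  obtain p where p: "p > 0" "(f ^^ p) x = x" using period_exists[OF assms] by blast
  have hback: "(f ^^ (p * k - k)) ((f ^^ k) x) = x"
  proof -
    have "p * k \<ge> k" using p by simp
    then have "(f ^^ (p * k - k)) ((f ^^ k) x) = (f ^^ (p * k)) x"
      by (metis funpow_add le_add_diff_inverse2 o_apply)
    then show ?thesis using funpow_mult_period[OF p(2)] by simp
  qed
  show ?thesis
  proof
    show "{(f ^^ m) ((f ^^ k) x) | m. True} \<subseteq> {(f ^^ m) x | m. True}"
    proof safe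
      fix m
      have "(f ^^ m) ((f ^^ k) x) = (f ^^ (m + k)) x" by (simp add: funpow_add)
      then show "\<exists>m'. (f ^^ m) ((f ^^ k) x) = (f ^^ m') x \<and> True" by blast
    qed
    show "{(f ^^ m) x | m. True} \<subseteq> {(f ^^ m) ((f ^^ k) x) | m. True}"
    proof safe
      fix m
      have "(f ^^ m) x = (f ^^ (m + (p * k - k))) ((f ^^ k) x)"
        using hback by (metis funpow_add o_apply)
      then show "\<exists>m'. (f ^^ m) x = (f ^^ m') ((f ^^ k) x) \<and> True" by blast
    qed
  qed
qed

lemma orbit_count:
  assumes fin: "finite S" and img: "f ` S \<subseteq> S" and inj: "inj_on f S"
    and H: "\<And>x. x \<in> S \<Longrightarrow> f x \<noteq> x \<and> f (f x) \<noteq> x \<and> f (f (f x)) \<noteq> x"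
  shows "4 * card (orbits_of f S) \<le> card S"
proof -
  define Orb where "Orb x = {(f ^^ k) x | k. True}" for x
  have OS: "Orb x \<subseteq> S" if "x \<in> S" for x using funpow_img[OF img that] by (auto simp: Orb_def)
  have Oeq: "Orb y = Orb x" if hx: "x \<in> S" "y \<in> Orb x" for x y
  proof -
    obtain k where "y = (f ^^ k) x" using hx(2) by (auto simp: Orb_def)
    then show ?thesis using orbit_eq[OF fin img inj hx(1), of k] by (simp add: Orb_def)
  qed
  have orb: "orbits_of f S = Orb ` S" by (simp add: orbits_of_def Orb_def)
  have U: "\<Union> (Orb ` S) = S"
  proof
    show "\<Union> (Orb ` S) \<subseteq> S" using OS by auto
    show "S \<subseteq> \<Union> (Orb ` S)"
    proof
      fix x assume "x \<in> S"
      moreover have "x \<in> Orb x" unfolding Orb_def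
        by (rule CollectI, rule exI[of _ 0]) simp
      ultimately show "x \<in> \<Union> (Orb ` S)" by auto
    qed
  qed
  have disj: "pairwise disjnt (Orb ` S)"
    unfolding pairwise_def disjnt_def
  proof (intro ballI impI)
    fix A B assume "A \<in> Orb ` S" "B \<in> Orb ` S" "A \<noteq> B"
    then obtain x y where xy: "x \<in> S" "y \<in> S" "A = Orb x" "B = Orb y" by auto
    show "A \<inter> B = {}"
    proof (rule ccontr)
      assume "A \<inter> B \<noteq> {}"
      then obtain z where "z \<in> Orb x" "z \<in> Orb y" using xy by auto
      then have "Orb z = Orb x" "Orb z = Orb y" using Oeq[OF xy(1)] Oeq[OF xy(2)] by blast+
      then show False using xy \<open>A \<noteq> B\<close> by simp
    qed
  qed
  have finO: "finite (Orb ` S)" using fin by simp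
  have fin_each: "\<And>A. A \<in> Orb ` S \<Longrightarrow> finite A" using OS fin finite_subset by blast
  have card4: "4 \<le> card (Orb x)" if "x \<in> S" for x
  proof -
    have e1: "f x = (f ^^ 1) x" and e2: "f (f x) = (f ^^ 2) x" and e3: "f (f (f x)) = (f ^^ 3) x"
      by (simp_all add: numeral_2_eq_2 numeral_3_eq_3)
    have e0: "x = (f ^^ 0) x" by simp
    have sub: "{x, f x, f (f x), f (f (f x))} \<subseteq> Orb x"
      unfolding Orb_def using e0 e1 e2 e3 by blast
    have fx: "f x \<in> S" "f (f x) \<in> S" using img that by auto
    have d: "x \<noteq> f x" "x \<noteq> f (f x)" "x \<noteq> f (f (f x))" "f x \<noteq> f (f x)"
      "f x \<noteq> f (f (f x))" "f (f x) \<noteq> f (f (f x))"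
      using H[OF that] H[OF fx(1)] H[OF fx(2)] by metis+
    have "card {x, f x, f (f x), f (f (f x))} = 4"
      using d by simp
    then show ?thesis using card_mono[OF _ sub] OS[OF that] fin finite_subset by metis
  qed
  have "card S = sum card (Orb ` S)"
    using card_Union_disjoint[OF disj] U fin_each by simp
  also have "\<dots> \<ge> 4 * card (Orb ` S)"
    using sum_bounded_below[of "Orb ` S" 4 card] card4 by (auto simp: mult.commute)
  finally show ?thesis using orb by simp
qed



lemma face_step_simp:
  "face_step V E rot tw (u, w, s) =
    (w, (if (if tw u w then \<not> s else s) then rot w u else inv_into (nbrs V E w) (rot w) u),
     (if tw u w then \<not> s else s))"
  by (simp add: face_step_def Let_def)

lemma rot_facts:
  assumes rot: "is_rotation V E rot" and w: "w \<in> V" and u: "u \<in> nbrs V E w"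
  shows "rot w u \<in> nbrs V E w" "inv_into (nbrs V E w) (rot w) u \<in> nbrs V E w"
    "\<And>x. x \<in> nbrs V E w \<Longrightarrow> x \<noteq> u \<Longrightarrow> rot w u \<noteq> u"
    "\<And>x. x \<in> nbrs V E w \<Longrightarrow> x \<noteq> u \<Longrightarrow> inv_into (nbrs V E w) (rot w) u \<noteq> u"
proof -
  let ?N = "nbrs V E w"
  have bij: "bij_betw (rot w) ?N ?N" and cyc: "\<forall>x\<in>?N. \<forall>y\<in>?N. \<exists>k. (rot w ^^ k) x = y"
    using rot w unfolding is_rotation_def by auto
  show r1: "rot w u \<in> ?N" using bij u by (meson bij_betwE)
  show r2: "inv_into ?N (rot w) u \<in> ?N" using bij_betw_inv_into[OF bij] u by (meson bij_betwE)
  have nofix: "rot w u \<noteq> u" if x: "x \<in> ?N" "x \<noteq> u" for x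
  proof
    assume fx: "rot w u = u"
    have "(rot w ^^ k) u = u" for k by (induction k) (simp_all add: fx)
    moreover obtain k where "(rot w ^^ k) u = x" using cyc u x by blast
    ultimately show False using x by simp
  qed
  then show "\<And>x. x \<in> ?N \<Longrightarrow> x \<noteq> u \<Longrightarrow> rot w u \<noteq> u" by blast
  show "\<And>x. x \<in> ?N \<Longrightarrow> x \<noteq> u \<Longrightarrow> inv_into ?N (rot w) u \<noteq> u"
  proof
    fix x assume x: "x \<in> ?N" "x \<noteq> u" and e: "inv_into ?N (rot w) u = u"
    have "u \<in> rot w ` ?N" using bij u by (simp add: bij_betw_def)
    then have "rot w (inv_into ?N (rot w) u) = u" by (rule f_inv_into_f)
    then have "rot w u = u" using e by simp
    then show False using nofix x by blast
  qed
qed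

lemma face_bound:
  fixes V :: "'a set" and E side rot tw
  assumes finV: "finite V" and symE: "\<And>u w. E u w = E w u"
    and bip: "\<And>u w. E u w \<Longrightarrow> side u \<noteq> (side w :: bool)"
    and deg: "\<And>u w. (u, w) \<in> darts V E \<Longrightarrow> \<exists>x\<in>nbrs V E w. x \<noteq> u"
    and rot: "is_rotation V E rot"
  shows "4 * num_faces V E rot tw \<le> card (darts V E)"
proof -
  define S where "S = {(u, w, s :: bool). (u, w) \<in> darts V E}"
  define f where "f = face_step V E rot tw"
  have finD: "finite (darts V E)"
    by (rule finite_subset[of _ "V \<times> V"]) (auto simp: darts_def finV)
  have Sim: "S = (\<lambda>((u, w), s). (u, w, s)) ` (darts V E \<times> (UNIV :: bool set))"
    unfolding S_def by force
  have finS: "finite S" using Sim finD by simp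
  have cardS: "card S \<le> 2 * card (darts V E)"
    using Sim card_image_le[of "darts V E \<times> (UNIV :: bool set)" "\<lambda>((u, w), s). (u, w, s)"] finD
    by (simp add: card_cartesian_product)
  have step: "fst (f y) = fst (snd y) \<and> f y \<in> S \<and> fst (snd (f y)) \<noteq> fst y"
    if y: "y \<in> S" for y
  proof -
    obtain u w s where yy: "y = (u, w, s)" by (cases y) auto
    have d: "u \<in> V" "w \<in> V" "E u w" using y yy by (auto simp: S_def darts_def)
    have uN: "u \<in> nbrs V E w" using d symE by (simp add: nbrs_def)
    obtain x where x: "x \<in> nbrs V E w" "x \<noteq> u" using deg[of u w] d by (auto simp: darts_def)
    note R = rot_facts[OF rot d(2) uN]
    show ?thesis
      using R(1,2) R(3)[OF x] R(4)[OF x] d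
      by (auto simp: f_def yy face_step_simp S_def darts_def nbrs_def)
  qed
  have img: "f ` S \<subseteq> S" using step by auto
  have inj: "inj_on f S"
  proof (rule inj_onI)
    fix y1 y2 assume y: "y1 \<in> S" "y2 \<in> S" "f y1 = f y2"
    obtain u1 w1 s1 where y1: "y1 = (u1, w1, s1)" by (cases y1) auto
    obtain u2 w2 s2 where y2: "y2 = (u2, w2, s2)" by (cases y2) auto
    have d1: "w1 \<in> V" "u1 \<in> nbrs V E w1" using y y1 symE by (auto simp: S_def darts_def nbrs_def)
    have d2: "w2 \<in> V" "u2 \<in> nbrs V E w2" using y y2 symE by (auto simp: S_def darts_def nbrs_def)
    define s1' where "s1' = (if tw u1 w1 then \<not> s1 else s1)"
    define s2' where "s2' = (if tw u2 w2 then \<not> s2 else s2)"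
    have eq: "(w1, (if s1' then rot w1 u1 else inv_into (nbrs V E w1) (rot w1) u1), s1') =
      (w2, (if s2' then rot w2 u2 else inv_into (nbrs V E w2) (rot w2) u2), s2')"
      using y(3) unfolding f_def y1 y2 face_step_simp s1'_def s2'_def .
    have ww: "w1 = w2" and ss: "s1' = s2'" using eq by simp_all
    have eq2: "(if s1' then rot w1 u1 else inv_into (nbrs V E w1) (rot w1) u1) =
      (if s1' then rot w1 u2 else inv_into (nbrs V E w1) (rot w1) u2)"
      using eq ww ss by simp
    let ?N = "nbrs V E w1"
    have bij: "bij_betw (rot w1) ?N ?N" using rot d1 unfolding is_rotation_def by auto
    have uu: "u1 = u2"
    proof (cases s1')
      case True
      then have "rot w1 u1 = rot w1 u2" using eq2 by simp
      then show ?thesis using bij d1 d2 ww by (metis bij_betw_def inj_onD)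
    next
      case False
      then have "inv_into ?N (rot w1) u1 = inv_into ?N (rot w1) u2" using eq2 by simp
      moreover have "u1 \<in> rot w1 ` ?N" "u2 \<in> rot w1 ` ?N" using bij d1 d2 ww by (auto simp: bij_betw_def)
      ultimately show ?thesis using inv_into_injective by metis
    qed
    have "s1 = s2" using ss uu ww unfolding s1'_def s2'_def by (auto split: if_splits)
    then show "y1 = y2" using y1 y2 uu ww by simp
  qed
  have side_step: "side (fst (f y)) \<noteq> side (fst y)" if "y \<in> S" for y
  proof -
    obtain u w s where yy: "y = (u, w, s)" by (cases y) auto
    have "E u w" using that yy by (auto simp: S_def darts_def)
    then show ?thesis using step[OF that] bip yy by auto
  qed
  have H: "f y \<noteq> y \<and> f (f y) \<noteq> y \<and> f (f (f y)) \<noteq> y" if y: "y \<in> S" for y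
  proof (intro conjI)
    have fy: "f y \<in> S" "f (f y) \<in> S" using step y by auto
    show "f y \<noteq> y" using side_step[OF y] by metis
    show "f (f y) \<noteq> y" using step[OF y] step[OF fy(1)] by metis
    show "f (f (f y)) \<noteq> y" using side_step[OF y] side_step[OF fy(1)] side_step[OF fy(2)] by metis
  qed
  have "4 * card (orbits_of f S) \<le> card S" by (rule orbit_count[OF finS img inj H])
  then have "4 * card (orbits_of f S) \<le> 2 * card (darts V E)" using cardS by linarith
  then show ?thesis unfolding num_faces_def f_def S_def[symmetric] by linarith
qed



lemma cyc_exists:
  assumes fin: "finite N"
  shows "\<exists>r. bij_betw r N N \<and> (\<forall>x\<in>N. \<forall>y\<in>N. \<exists>k. (r ^^ k) x = y)"
proof (cases "N = {}")
  case True then show ?thesis by (intro exI[of _ id]) auto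
next
  case False
  obtain xs where xs: "set xs = N" "distinct xs" using finite_distinct_list[OF fin] by blast
  define m where "m = length xs"
  define g where "g = (!) xs"
  have m: "m > 0" using False xs by (auto simp: m_def)
  have bg: "bij_betw g {..<m} N" unfolding g_def m_def using bij_betw_nth xs by blast
  define ix where "ix = the_inv_into {..<m} g"
  have ixg: "ix (g i) = i" if "i < m" for i
    unfolding ix_def using bg that by (simp add: bij_betw_def the_inv_into_f_f)
  have gix: "g (ix y) = y" "ix y < m" if "y \<in> N" for y
    unfolding ix_def using bg that
    by (auto simp: bij_betw_def f_the_inv_into_f the_inv_into_f_f)
  define r where "r x = g (Suc (ix x) mod m)" for x
  have pw: "(r ^^ k) (g i) = g ((i + k) mod m)" if "i < m" for i k
  proof (induction k)
    case 0 then show ?case using that by simp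
  next
    case (Suc k)
    have "(r ^^ Suc k) (g i) = r (g ((i + k) mod m))" using Suc by simp
    also have "\<dots> = g (Suc ((i + k) mod m) mod m)" unfolding r_def using m by (simp add: ixg)
    also have "Suc ((i + k) mod m) mod m = (i + Suc k) mod m" by (simp add: mod_Suc_eq)
    finally show ?case .
  qed
  have rN: "r x \<in> N" if "x \<in> N" for x
    unfolding r_def using bg m by (auto simp: bij_betw_def)
  have powN: "(r ^^ k) x \<in> N" if "x \<in> N" for x k
    using that by (induction k) (auto simp: rN)
  have surj: "r ` N = N"
  proof
    show "r ` N \<subseteq> N" using rN by auto
    show "N \<subseteq> r ` N"
    proof
      fix y assume y: "y \<in> N"
      have "(r ^^ m) y = y" using pw[OF gix(2)[OF y], of m] gix[OF y] by simp
      moreover have "(r ^^ m) y = r ((r ^^ (m - 1)) y)"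
        using m by (metis Suc_diff_1 funpow.simps(2) o_apply)
      ultimately show "y \<in> r ` N" using powN[OF y] by (metis image_eqI)
    qed
  qed
  have bij: "bij_betw r N N"
    unfolding bij_betw_def using surj fin by (simp add: eq_card_imp_inj_on)
  have cyc: "\<exists>k. (r ^^ k) x = y" if "x \<in> N" "y \<in> N" for x y
  proof -
    let ?i = "ix x" and ?j = "ix y"
    have "(r ^^ (?j + m - ?i)) x = g ((?i + (?j + m - ?i)) mod m)"
      using pw[OF gix(2)[OF that(1)]] gix(1)[OF that(1)] by metis
    also have "(?i + (?j + m - ?i)) mod m = ?j"
      using gix(2)[OF that(1)] gix(2)[OF that(2)] by simp
    finally show ?thesis using gix(1)[OF that(2)] by metis
  qed
  show ?thesis using bij cyc by blast
qed

lemma rotation_exists: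
  assumes "finite V"
  shows "\<exists>rot. is_rotation V E rot"
proof -
  have fN: "finite (nbrs V E v)" for v using assms by (simp add: nbrs_def)
  define rot where "rot v = (SOME r. bij_betw r (nbrs V E v) (nbrs V E v) \<and>
      (\<forall>x\<in>nbrs V E v. \<forall>y\<in>nbrs V E v. \<exists>k. (r ^^ k) x = y))" for v
  have "is_rotation V E rot"
    unfolding is_rotation_def
  proof
    fix v
    show "bij_betw (rot v) (nbrs V E v) (nbrs V E v) \<and>
      (\<forall>x\<in>nbrs V E v. \<forall>y\<in>nbrs V E v. \<exists>k. (rot v ^^ k) x = y)"
      unfolding rot_def using cyc_exists[OF fN[of v]] by (rule someI_ex)
  qed
  then show ?thesis by blast
qed

lemma genus_lower:
  fixes V :: "'a set" and E side
  assumes finV: "finite V" and symE: "\<And>u w. E u w = E w u"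
    and bip: "\<And>u w. E u w \<Longrightarrow> side u \<noteq> (side w :: bool)"
    and deg: "\<And>u w. (u, w) \<in> darts V E \<Longrightarrow> \<exists>x\<in>nbrs V E w. x \<noteq> u"
  shows "4 * euler_genus V E \<ge> 8 - 4 * int (card V) + 4 * int (card (graph_edges V E)) - int (card (darts V E))"
proof -
  define B where "B = 8 - 4 * int (card V) + 4 * int (card (graph_edges V E)) - int (card (darts V E))"
  define hi where "hi = 2 - int (card V) + int (card (graph_edges V E))"
  define A where "A = {scheme_euler_genus V E rot tw | rot tw. is_rotation V E rot \<and> is_signature tw}"
  have lowA: "4 * a \<ge> B \<and> a \<le> hi" if aA: "a \<in> A" for a
  proof -
    obtain rot tw where rt: "a = scheme_euler_genus V E rot tw" "is_rotation V E rot"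
      using aA by (auto simp: A_def)
    have "4 * num_faces V E rot tw \<le> card (darts V E)"
      by (rule face_bound[OF finV symE bip deg rt(2)])
    then have "int (4 * num_faces V E rot tw) \<le> int (card (darts V E))"
      by (simp only: of_nat_le_iff)
    then have "4 * int (num_faces V E rot tw) \<le> int (card (darts V E))" by simp
    then show ?thesis unfolding rt(1) scheme_euler_genus_def B_def hi_def by (simp add: algebra_simps)
  qed
  obtain rot where rot: "is_rotation V E rot" using rotation_exists[OF finV] by blast
  have sig: "is_signature (\<lambda>_ _. False)" by (simp add: is_signature_def)
  have ne: "A \<noteq> {}" using rot sig unfolding A_def by blast
  have "A \<subseteq> {- \<bar>B\<bar> .. hi}"
  proof
    fix a assume "a \<in> A" then show "a \<in> {- \<bar>B\<bar> .. hi}" using lowA[of a] by auto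
  qed
  then have finA: "finite A" using finite_subset by blast
  have "Min A \<in> A" using Min_in[OF finA ne] .
  then have "4 * Min A \<ge> B" using lowA by blast
  then show ?thesis unfolding euler_genus_def A_def[symmetric] B_def .
qed



lemma triples_finite: "finite (triples n)"
  by (rule finite_subset[of _ "Pow {1..n}"]) (auto simp: triples_def)

lemma card_triples: "card (triples n) = n choose 3"
  using n_subsets[of "{1..n}" 3] by (simp add: triples_def)

lemma levi_sym: "levi_E n u w = levi_E n w u"
  by (cases u; cases w) auto

lemma levi_bip: "levi_E n u w \<Longrightarrow> isl u \<noteq> isl w"
  by (cases u; cases w) auto

lemma levi_finite: "finite (levi_V n)"
  using triples_finite by (simp add: levi_V_def)

lemma card_levi_V: "card (levi_V n) = n + (n choose 3)"
proof -
  have "card (levi_V n) = card (Inl ` {1..n} :: (nat + nat set) set) + card (Inr ` triples n :: (nat + nat set) set)"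
    unfolding levi_V_def by (rule card_Un_disjoint) (auto simp: triples_finite)
  also have "\<dots> = n + (n choose 3)"
    by (simp add: card_image card_triples)
  finally show ?thesis .
qed

definition PP :: "nat \<Rightarrow> (nat set \<times> nat) set" where
  "PP n = (SIGMA t:triples n. t)"

lemma card_PP: "card (PP n) = 3 * (n choose 3)"
proof -
  have fin: "\<forall>t\<in>triples n. finite t" by (auto simp: triples_def intro: finite_subset)
  have "card (PP n) = (\<Sum>t\<in>triples n. card t)"
    unfolding PP_def using triples_finite fin by simp
  also have "\<dots> = (\<Sum>t\<in>triples n. 3)" by (rule sum.cong) (auto simp: triples_def)
  finally show ?thesis by (simp add: card_triples)
qed

lemma PP_finite: "finite (PP n)"
  unfolding PP_def by (rule finite_SigmaI[OF triples_finite]) (auto simp: triples_def intro: finite_subset)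

lemma darts_levi: "darts (levi_V n) (levi_E n) =
   (\<lambda>(t, i). (Inl i, Inr t)) ` PP n \<union> (\<lambda>(t, i). (Inr t, Inl i)) ` PP n"
proof (rule set_eqI)
  fix d :: "(nat + nat set) \<times> (nat + nat set)"
  obtain u w where d: "d = (u, w)" by (cases d)
  show "d \<in> darts (levi_V n) (levi_E n) \<longleftrightarrow>
    d \<in> (\<lambda>(t, i). (Inl i, Inr t)) ` PP n \<union> (\<lambda>(t, i). (Inr t, Inl i)) ` PP n"
    unfolding d by (cases u; cases w) (auto simp: darts_def levi_V_def PP_def triples_def image_iff)
qed

lemma card_darts_levi: "card (darts (levi_V n) (levi_E n)) = 6 * (n choose 3)"
proof -
  have "card ((\<lambda>(t, i). (Inl i, Inr t)) ` PP n \<union> (\<lambda>(t, i). (Inr t, Inl i)) ` PP n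
      :: ((nat + nat set) \<times> (nat + nat set)) set)
    = card ((\<lambda>(t, i). (Inl i, Inr t)) ` PP n :: ((nat + nat set) \<times> (nat + nat set)) set)
      + card ((\<lambda>(t, i). (Inr t, Inl i)) ` PP n :: ((nat + nat set) \<times> (nat + nat set)) set)"
    by (rule card_Un_disjoint) (auto simp: PP_finite)
  also have "\<dots> = card (PP n) + card (PP n)"
    by (subst card_image, force simp: inj_on_def, subst card_image, force simp: inj_on_def, rule refl)
  finally show ?thesis by (simp add: darts_levi card_PP)
qed

lemma edges_levi: "graph_edges (levi_V n) (levi_E n) = (\<lambda>(t, i). {Inl i, Inr t}) ` PP n"
proof -
  have "graph_edges (levi_V n) (levi_E n) = (\<lambda>(u, w). {u, w}) ` darts (levi_V n) (levi_E n)"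
    unfolding graph_edges_def by auto
  also have "\<dots> = (\<lambda>(t, i). {Inl i, Inr t}) ` PP n"
  proof -
    have e1: "(\<lambda>(u, w). {u, w}) ` ((\<lambda>(t, i). (Inl i, Inr t)) ` PP n) = (\<lambda>(t, i). {Inl i, Inr t}) ` PP n"
      unfolding image_image by (rule image_cong) auto
    have e2: "(\<lambda>(u, w). {u, w}) ` ((\<lambda>(t, i). (Inr t, Inl i)) ` PP n) = (\<lambda>(t, i). {Inl i, Inr t}) ` PP n"
      unfolding image_image by (rule image_cong) (auto simp: insert_commute)
    show ?thesis unfolding darts_levi image_Un e1 e2 by simp
  qed
  finally show ?thesis .
qed

lemma card_edges_levi: "card (graph_edges (levi_V n) (levi_E n)) = 3 * (n choose 3)"
proof -
  have "inj_on (\<lambda>(t, i). {Inl i, Inr t} :: (nat + nat set) set) (PP n)"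
    by (auto simp: inj_on_def doubleton_eq_iff)
  then show ?thesis by (simp add: edges_levi card_image card_PP)
qed



lemma levi_deg:
  assumes n: "n \<ge> 4" and d: "(u, w) \<in> darts (levi_V n) (levi_E n)"
  shows "\<exists>x\<in>nbrs (levi_V n) (levi_E n) w. x \<noteq> u"
proof -
  have uw: "levi_E n u w" using d by (simp add: darts_def)
  show ?thesis
  proof (cases u)
    case (Inl i)
    then obtain t where w: "w = Inr t" and t: "t \<in> triples n" "i \<in> t" "i \<in> {1..n}"
      using uw by (cases w) auto
    have "card t = 3" using t by (simp add: triples_def)
    then have "card (t - {i}) = 2" using t by simp
    then obtain j where j: "j \<in> t" "j \<noteq> i"
      by (metis Diff_iff card_0_eq finite.emptyI insertCI all_not_in_conv zero_neq_numeral)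
    have "j \<in> {1..n}" using j t by (auto simp: triples_def)
    then have "Inl j \<in> nbrs (levi_V n) (levi_E n) w"
      using j t w by (auto simp: nbrs_def levi_V_def)
    then show ?thesis using j Inl by auto
  next
    case (Inr t)
    then obtain i where w: "w = Inl i" and t: "t \<in> triples n" "i \<in> t" "i \<in> {1..n}"
      using uw by (cases w) auto
    have ct: "card t = 3" "t \<subseteq> {1..n}" using t by (auto simp: triples_def)
    have "card t < card {1..n}" using ct n by simp
    then obtain j where j: "j \<in> {1..n}" "j \<notin> t"
      using ct(2) by (metis psubsetI subsetI card_mono finite_atLeastAtMost leD)
    have "card (t - {i}) = 2" using t ct by simp
    then obtain k where k: "k \<in> t" "k \<noteq> i"
      by (metis Diff_iff card_0_eq finite.emptyI insertCI all_not_in_conv zero_neq_numeral)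
    define t' where "t' = {i, j, k}"
    have ij: "i \<noteq> j" "j \<noteq> k" using j t k by auto
    have t': "t' \<in> triples n" using ij k t j ct unfolding t'_def triples_def by auto
    have "t' \<noteq> t" using j unfolding t'_def by auto
    moreover have "Inr t' \<in> nbrs (levi_V n) (levi_E n) w"
      using t' t w unfolding nbrs_def levi_V_def t'_def by auto
    ultimately show ?thesis using Inr by auto
  qed
qed

lemma choose3: "6 * (n choose 3) = n * (n - 1) * (n - 2)"
proof (induction n)
  case 0 then show ?case by simp
next
  case (Suc n)
  have c2: "2 * (k choose 2) = k * (k - 1)" for k
  proof (induction k)
    case (Suc k) then show ?case by (cases k) (simp_all add: numeral_2_eq_2 algebra_simps)
  qed simp
  have "6 * (Suc n choose 3) = 6 * (n choose 2) + 6 * (n choose 3)"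
    by (simp add: numeral_3_eq_3 numeral_2_eq_2)
  also have "\<dots> = 3 * (n * (n - 1)) + n * (n - 1) * (n - 2)" using c2 Suc by simp
  also have "\<dots> = Suc n * (Suc n - 1) * (Suc n - 2)"
    by (cases n; cases "n - 1") (auto simp: algebra_simps)
  finally show ?case .
qed

theorem proposition2p2:
  fixes n :: nat
  assumes "n \<ge> 4"
  shows "euler_genus (levi_V n) (levi_E n)
           \<ge> \<lceil>real ((n - 2) * (n + 3) * (n - 4)) / 12\<rceil>"
proof -
  define T where "T = n choose 3"
  have g: "4 * euler_genus (levi_V n) (levi_E n) \<ge> 8 - 4 * int n + 2 * int T"
    using genus_lower[of "levi_V n" "levi_E n" isl, OF levi_finite levi_sym levi_bip levi_deg[OF assms]]
    by (simp add: card_levi_V card_darts_levi card_edges_levi T_def algebra_simps)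
  have T6: "6 * T = n * (n - 1) * (n - 2)" using choose3 T_def by simp
  obtain m where m: "n = m + 4" using assms by (metis add.commute le_add_diff_inverse)
  have T6m: "6 * T = (m + 4) * (m + 3) * (m + 2)" using T6 m by (simp add: algebra_simps)
  have T6': "6 * real T = real (m + 4) * real (m + 3) * real (m + 2)"
    using arg_cong[OF T6m, of real] by (simp add: algebra_simps)
  have lhs: "real ((n - 2) * (n + 3) * (n - 4)) = real (m + 2) * real (m + 7) * real m"
    using m by (simp add: algebra_simps)
  have "real ((n - 2) * (n + 3) * (n - 4)) / 12 \<le> real_of_int (euler_genus (levi_V n) (levi_E n))"
  proof -
    have g': "4 * real_of_int (euler_genus (levi_V n) (levi_E n)) \<ge> 8 - 4 * real n + 2 * real T"
      using g by linarith
    have "4 * (real ((n - 2) * (n + 3) * (n - 4)) / 12) = 8 - 4 * real n + 2 * real T"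
      unfolding lhs using T6' m by (simp add: field_simps)
    then show ?thesis using g' by linarith
  qed
  then show ?thesis by (simp add: ceiling_le_iff)
qed


end
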